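(* Consider the modification of MultiQT in which the forecast is $q_t=\textsc{Sort}(b_t+\tilde\theta_t)$ and the hidden offsets are updated by $\tilde\theta_{t+1}^{\alpha}=\tilde\theta_t^{\alpha}-\eta(\mathbb{1}\{y_t\le q_t^{\alpha}\}-\alpha)$ for each $\alpha\in\mathcal{A}$. There exist a set of levels $\mathcal{A}$ and a sequence $(y_t,b_t)$ with $|y_t-b_t^{\alpha}|<R$ for all $\alpha,t$ (for some $R>0$) such that for some $\alpha\in\mathcal{A}$, $\lim_{T\to\infty}\frac1T\sum_{t=1}^T\mathbb{1}\{y_t\le q_t^{\alpha}\}\ne\alpha$.
   Context: $\mathcal{A}=\{\alpha_1<\dots<\alpha_m\}\subset(0,1)$ is a set of quantile levels, $\eta>0$ a learning rate, base forecasts $b_t$ have nondecreasing entries, and $\textsc{Sort}(v)$ is the vector whose $i$-th entry is the $i$-th smallest entry of $v$. *)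

theory Defs
  imports Complex_Main
begin

text \<open>Levels A = [alpha_1 < ... < alpha_m] as a list; vectors indexed by positions 0..m-1.
  Time is indexed from 0 (t = 0 corresponds to the paper's t = 1).\<close>

fun mqt_theta :: "real \<Rightarrow> real list \<Rightarrow> (nat \<Rightarrow> real) \<Rightarrow> (nat \<Rightarrow> real list) \<Rightarrow> nat \<Rightarrow> real list" where
  "mqt_theta eta A y b 0 = replicate (length A) 0"
| "mqt_theta eta A y b (Suc t) =
     (let th = mqt_theta eta A y b t;
          q = sort (map2 (+) (b t) th)
      in map (\<lambda>i. th ! i - eta * (of_bool (y t \<le> q ! i) - A ! i)) [0..<length A])"

definition mqt_forecast :: "real \<Rightarrow> real list \<Rightarrow> (nat \<Rightarrow> real) \<Rightarrow> (nat \<Rightarrow> real list) \<Rightarrow> nat \<Rightarrow> real list" where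
  "mqt_forecast eta A y b t = sort (map2 (+) (b t) (mqt_theta eta A y b t))"

end

theory Submission
  imports Defs
begin

definition yy :: "nat \<Rightarrow> real" where "yy t = (if t = 0 then 1 else 0)"
definition bb :: "nat \<Rightarrow> real list" where "bb t = (if t = 0 then [0,2] else [0,0])"
definition AA :: "real list" where "AA = [1/4, 3/4]"

lemma theta_shape:
  assumes "eta > 0"
  shows "\<exists>x z. mqt_theta eta AA yy bb (Suc t) = [x, z] \<and> x > 0 \<and> z < 0"
proof (induction t)
  case 0
  show ?case using assms
    by (intro exI[of _ "eta * (1/4)"] exI[of _ "- eta * (1/4)"]) (simp add: AA_def yy_def bb_def upt_rec)
next
  case (Suc t)
  then obtain x z where h: "mqt_theta eta AA yy bb (Suc t) = [x, z]" "x > 0" "z < 0" by blast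
  have e: "mqt_theta eta AA yy bb (Suc (Suc t)) = [x + eta/4, z - eta/4]"
    using assms h by (simp only: mqt_theta.simps(2)[of eta AA yy bb "Suc t"] h(1) Let_def)
       (simp add: AA_def yy_def bb_def upt_rec)
  show ?case using assms h e by simp
qed

lemma cov_zero:
  assumes "eta > 0"
  shows "\<not> (yy t \<le> mqt_forecast eta AA yy bb t ! 0)"
proof (cases t)
  case 0
  then show ?thesis by (simp add: mqt_forecast_def AA_def yy_def bb_def)
next
  case (Suc s)
  then obtain x z where h: "mqt_theta eta AA yy bb t = [x, z]" "x > 0" "z < 0"
    using theta_shape[OF assms, of s] by blast
  show ?thesis using h Suc by (simp add: mqt_forecast_def yy_def bb_def)
qed

theorem proposition13:
  fixes eta :: real
  assumes "eta > 0"
  shows "\<exists>(A :: real list) (y :: nat \<Rightarrow> real) (b :: nat \<Rightarrow> real list) (R :: real).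
           A \<noteq> [] \<and> sorted_wrt (<) A \<and> (\<forall>a\<in>set A. 0 < a \<and> a < 1) \<and>
           (\<forall>t. length (b t) = length A \<and> sorted (b t)) \<and>
           R > 0 \<and> (\<forall>t i. i < length A \<longrightarrow> \<bar>y t - b t ! i\<bar> < R) \<and>
           (\<exists>i < length A. \<exists>L.
              ((\<lambda>T. (\<Sum>t<T. of_bool (y t \<le> mqt_forecast eta A y b t ! i)) / real T) \<longlonglongrightarrow> L)
              \<and> L \<noteq> A ! i)"
proof -
  have s: "(\<lambda>T. (\<Sum>t<T. of_bool (yy t \<le> mqt_forecast eta AA yy bb t ! 0)) / real T) = (\<lambda>T. 0::real)"
    using cov_zero[OF assms] by simp
  have b: "\<forall>t i. i < length AA \<longrightarrow> \<bar>yy t - bb t ! i\<bar> < 2"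
  proof (intro allI impI)
    fix t i assume "i < length AA"
    then have "i = 0 \<or> i = 1" by (auto simp: AA_def)
    then show "\<bar>yy t - bb t ! i\<bar> < 2" by (auto simp: yy_def bb_def)
  qed
  show ?thesis
    apply (rule exI[of _ AA], rule exI[of _ yy], rule exI[of _ bb], rule exI[of _ 2])
    apply (intro conjI)
    using b apply (auto simp: AA_def bb_def)[6]
    apply (rule exI[of _ 0])
    apply (simp add: AA_def)
    apply (rule exI[of _ 0])
    using s by (simp add: AA_def)
qed

end
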